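(* Let $n$ be a positive integer, let $s_1,s_2,s_3>0$, and let $z\in\mathbb{R}$ (in the application $z=x_1-2x_2+x_3$ for observed cell means $x_1,x_2,x_3$). For $\rho=(\rho_1,\rho_2,\rho_3)$ put $$s^2(\rho_1,\rho_2,\rho_3)=s_1^2+4s_2^2+s_3^2-4s_1s_2\rho_3+2s_1s_3\rho_2-4s_2s_3\rho_1,$$ $s(\rho_1,\rho_2,\rho_3)=\sqrt{s^2(\rho_1,\rho_2,\rho_3)}$, and $$f_n(z;\rho_1,\rho_2,\rho_3)=\sqrt{\frac{n}{2\pi}}\,\frac{1}{s(\rho_1,\rho_2,\rho_3)}\exp\Big(-\frac{nz^2}{2s^2(\rho_1,\rho_2,\rho_3)}\Big).$$ Let $$R=\big\{(\rho_1,\rho_2,\rho_3): -1<\rho_i<1\ (i=1,2,3),\ 1-\rho_1^2-\rho_2^2-\rho_3^2+2\rho_1\rho_2\rho_3>0,\ s(\rho_1,\rho_2,\rho_3)\le s(0,0,0)\big\},$$ and define the evidential value $$\mathbb V=\frac{\sup_{(\rho_1,\rho_2,\rho_3)\in R} f_n(z;\rho_1,\rho_2,\rho_3)}{f_n(z;0,0,0)}.$$ Define $s_L^2=\inf_{(\rho_1,\rho_2,\rho_3)\in R}s^2(\rho_1,\rho_2,\rho_3)$, $\tilde s_L^2=\min\{(2s_2-(s_1+s_3))^2,\ (2s_2-\sqrt{s_1^2+s_3^2})^2\}$ with $\tilde s_L\ge 0$, and $s_0^2=s^2(0,0,0)=s_1^2+4s_2^2+s_3^2$ with $s_0>0$.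 Then $s_L^2\le \tilde s_L^2\le s_0^2$. Moreover: (i) if $\tilde s_L^2\le nz^2\le s_0^2$, then $$\mathbb V=\frac{s_0}{\sqrt{nz^2}}\exp\Big\{-\frac12 nz^2\Big[\frac1{nz^2}-\frac1{s_0^2}\Big]\Big\}\ge 1;$$ (ii) if $nz^2\le \tilde s_L^2$, then $$\mathbb V\ge \frac{s_0}{\tilde s_L}\exp\Big\{-\frac12 nz^2\Big[\frac1{\tilde s_L^2}-\frac1{s_0^2}\Big]\Big\}\ge 1,$$ and $\mathbb V$ is at most $\frac{s_0}{\sqrt{nz^2}}\exp\{-\frac12 nz^2[\frac1{nz^2}-\frac1{s_0^2}]\}$; (iii) if $s_0^2\le nz^2$, then $\mathbb V=1$.
   Context: Statistical setting (for motivation): $\sqrt n\,(X_1-2X_2+X_3)$ is modeled as normal with mean $0$ and variance $\sigma_1^2+4\sigma_2^2+\sigma_3^2-4\sigma_1\sigma_2\rho_3+2\sigma_1\sigma_3\rho_2-4\sigma_2\sigma_3\rho_1$, where $X_i$ are three cell means of $n$ observations each, $\sigma_i^2$ the cell variances and $\rho_1,\rho_2,\rho_3$ correlations between cell means; $f_n$ is this normal density of $Z=X_1-2X_2+X_3$ evaluated at $z$ with $\sigma_i$ replaced by the sample standard deviations $s_i$. The set $R$ is the set of admissible correlation parameters under the "fabrication" hypothesis, and $(0,0,0)$ corresponds to the independence hypothesis. *)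

theory Defs
  imports "HOL-Analysis.Analysis"
begin

definition sig2 :: "real \<Rightarrow> real \<Rightarrow> real \<Rightarrow> real \<times> real \<times> real \<Rightarrow> real" where
  "sig2 s1 s2 s3 = (\<lambda>(r1, r2, r3).
     s1^2 + 4* s2^2 + s3^2 - 4* s1* s2*r3 + 2* s1* s3*r2 - 4* s2* s3*r1)"

definition sig :: "real \<Rightarrow> real \<Rightarrow> real \<Rightarrow> real \<times> real \<times> real \<Rightarrow> real" where
  "sig s1 s2 s3 r = sqrt (sig2 s1 s2 s3 r)"

definition fdens :: "nat \<Rightarrow> real \<Rightarrow> real \<Rightarrow> real \<Rightarrow> real \<Rightarrow> real \<times> real \<times> real \<Rightarrow> real" where
  "fdens n s1 s2 s3 z r =
     sqrt (real n / (2*pi)) * (1 / sig s1 s2 s3 r) * exp (- (real n * z^2) / (2 * sig2 s1 s2 s3 r))"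

definition Rset :: "real \<Rightarrow> real \<Rightarrow> real \<Rightarrow> (real \<times> real \<times> real) set" where
  "Rset s1 s2 s3 = {(r1, r2, r3).
     -1 < r1 \<and> r1 < 1 \<and> -1 < r2 \<and> r2 < 1 \<and> -1 < r3 \<and> r3 < 1 \<and>
     1 - r1^2 - r2^2 - r3^2 + 2*r1*r2*r3 > 0 \<and>
     sig s1 s2 s3 (r1, r2, r3) \<le> sig s1 s2 s3 (0, 0, 0)}"

text \<open>Evidential value, as an extended real (the supremum may be infinite).\<close>
definition evV :: "nat \<Rightarrow> real \<Rightarrow> real \<Rightarrow> real \<Rightarrow> real \<Rightarrow> ereal" where
  "evV n s1 s2 s3 z =
     (SUP r\<in>Rset s1 s2 s3. ereal (fdens n s1 s2 s3 z r)) / ereal (fdens n s1 s2 s3 z (0, 0, 0))"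

definition sL2 :: "real \<Rightarrow> real \<Rightarrow> real \<Rightarrow> real" where
  "sL2 s1 s2 s3 = Inf (sig2 s1 s2 s3 ` Rset s1 s2 s3)"

definition tsL2 :: "real \<Rightarrow> real \<Rightarrow> real \<Rightarrow> real" where
  "tsL2 s1 s2 s3 = min ((2* s2 - (s1 + s3))^2) ((2* s2 - sqrt (s1^2 + s3^2))^2)"

definition tsL :: "real \<Rightarrow> real \<Rightarrow> real \<Rightarrow> real" where
  "tsL s1 s2 s3 = sqrt (tsL2 s1 s2 s3)"

definition s0 :: "real \<Rightarrow> real \<Rightarrow> real \<Rightarrow> real" where
  "s0 s1 s2 s3 = sqrt (s1^2 + 4* s2^2 + s3^2)"

text \<open>Upper bound of (i)/(ii); its value at n z^2 = 0 is the limit +infinity.\<close>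
definition Bup :: "nat \<Rightarrow> real \<Rightarrow> real \<Rightarrow> real \<Rightarrow> real \<Rightarrow> ereal" where
  "Bup n s1 s2 s3 z =
     (let a = real n * z^2; S = s0 s1 s2 s3 in
      if a > 0 then ereal (S / sqrt a * exp (- 1/2 * a * (1/a - 1/S^2))) else \<infinity>)"

text \<open>Lower bound of (ii); its value at tilde s_L = 0 is the limit +infinity.\<close>
definition Blow :: "nat \<Rightarrow> real \<Rightarrow> real \<Rightarrow> real \<Rightarrow> real \<Rightarrow> ereal" where
  "Blow n s1 s2 s3 z =
     (let a = real n * z^2; S = s0 s1 s2 s3; t = tsL s1 s2 s3 in
      if t > 0 then ereal (S / t * exp (- 1/2 * a * (1 / tsL2 s1 s2 s3 - 1/S^2))) else \<infinity>)"

end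

theory Submission imports Defs begin

definition gg :: "real \<Rightarrow> real \<Rightarrow> real" where
  "gg a t = exp (- a / (2*t)) / sqrt t"

lemma gg_exp: assumes "t > 0" shows "gg a t = exp (- a/(2*t) - ln t / 2)"
proof -
  have "sqrt t = exp (ln t / 2)"
  proof (rule real_sqrt_unique)
    show "(exp (ln t / 2))\<^sup>2 = t" using assms
      by (simp add: power2_eq_square exp_add[symmetric])
  qed simp
  then show ?thesis unfolding gg_def by (simp add: exp_diff)
qed

lemma gg_pos: "t > 0 \<Longrightarrow> gg a t > 0" unfolding gg_def by simp

lemma linA: fixes L Y X p q lu lt :: real
  shows "L \<le> Y - 1 \<Longrightarrow> L = lu - lt \<Longrightarrow> Y - 1 = X \<Longrightarrow> X \<le> p - q \<Longrightarrow> -(p/2) - lt/2 \<le> -(q/2) - lu/2"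
  by linarith
lemma linB: fixes L Y X p q lu lt :: real
  shows "L \<le> Y - 1 \<Longrightarrow> L = lu - lt \<Longrightarrow> Y - 1 = -X \<Longrightarrow> q - p \<le> X \<Longrightarrow> -(p/2) - lt/2 \<le> -(q/2) - lu/2"
  by linarith

lemma gg_mono1: assumes "0 < t" "t \<le> u" "u \<le> a" shows "gg a t \<le> gg a u"
proof -
  have u: "u > 0" using assms by simp
  have l: "ln (u/t) \<le> u/t - 1" using assms u by (intro ln_le_minus_one) simp
  have e1: "ln (u/t) = ln u - ln t" using assms u by (simp add: ln_div)
  have e2: "u/t - 1 = (u-t)/t" using assms by (simp add: field_simps)
  have e3: "a/t - a/u = (a/u) * ((u - t)/t)" using assms u by (simp add: field_simps)
  have "(a/u) * ((u - t)/t) \<ge> 1 * ((u - t)/t)"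
    using assms u by (intro mult_right_mono) (auto simp: field_simps)
  then have k: "(u-t)/t \<le> a/t - a/u" using e3 by simp
  have e4: "a/(2*t) = (a/t)/2" "a/(2*u) = (a/u)/2" by simp_all
  have "- (a/(2*t)) - ln t / 2 \<le> - (a/(2*u)) - ln u / 2"
    unfolding e4 by (rule linA[OF l e1 e2 k])
  then show ?thesis using gg_exp assms u by simp
qed

lemma gg_mono2: assumes "0 < a" "a \<le> u" "u \<le> t" shows "gg a t \<le> gg a u"
proof -
  have u: "u > 0" "t > 0" using assms by simp_all
  have l: "ln (u/t) \<le> u/t - 1" using assms u by (intro ln_le_minus_one) simp
  have e1: "ln (u/t) = ln u - ln t" using assms u by (simp add: ln_div)
  have e2: "u/t - 1 = -((t-u)/t)" using u by (simp add: field_simps)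
  have e3: "a/u - a/t = (a/u) * ((t - u)/t)" using assms u by (simp add: field_simps)
  have "(a/u) * ((t - u)/t) \<le> 1 * ((t - u)/t)"
    using assms u by (intro mult_right_mono) (auto simp: field_simps)
  then have k: "a/u - a/t \<le> (t-u)/t" using e3 by simp
  have e4: "a/(2*t) = (a/t)/2" "a/(2*u) = (a/u)/2" by simp_all
  have "- (a/(2*t)) - ln t / 2 \<le> - (a/(2*u)) - ln u / 2"
    unfolding e4 by (rule linB[OF l e1 e2 k])
  then show ?thesis using gg_exp assms u by simp
qed

lemma fd_pos: assumes "sig2 s1 s2 s3 r > 0"
  shows "fdens n s1 s2 s3 z r = sqrt (real n / (2*pi)) * gg (real n * z^2) (sig2 s1 s2 s3 r)"
  unfolding fdens_def sig_def gg_def by simp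

lemma fd_nonpos: assumes "sig2 s1 s2 s3 r \<le> 0"
  shows "fdens n s1 s2 s3 z r \<le> 0"
proof -
  have "1 / sig s1 s2 s3 r \<le> 0" unfolding sig_def using assms by simp
  then show ?thesis unfolding fdens_def
    by (intro mult_nonpos_nonneg mult_nonneg_nonpos) auto
qed

lemma sig2_0: "sig2 s1 s2 s3 (0,0,0) = s1^2+4* s2^2+s3^2" by (simp add: sig2_def)

lemma R_0: "(0,0,0) \<in> Rset s1 s2 s3" unfolding Rset_def by simp

lemma R_le: "r \<in> Rset s1 s2 s3 \<Longrightarrow> sig2 s1 s2 s3 r \<le> s1^2+4* s2^2+s3^2"
  unfolding Rset_def sig_def using sig2_0[of s1 s2 s3] by auto

lemma R_lb: assumes "r \<in> Rset s1 s2 s3" "s1 > 0" "s2 > 0" "s3 > 0"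
  shows "sig2 s1 s2 s3 r \<ge> s1^2+4* s2^2+s3^2 - 4* s1* s2 - 2* s1* s3 - 4* s2* s3"
proof -
  obtain r1 r2 r3 where r: "r = (r1,r2,r3)" by (cases r) auto
  have b: "r1 < 1" "r3 < 1" "-1 < r2" using assms(1) unfolding r Rset_def by auto
  have "s1* s2*r3 \<le> s1* s2*1" using b assms by (intro mult_left_mono) auto
  moreover have "s2* s3*r1 \<le> s2* s3*1" using b assms by (intro mult_left_mono) auto
  moreover have "s1* s3*(-1) \<le> s1* s3*r2" using b assms by (intro mult_left_mono) auto
  ultimately show ?thesis unfolding r sig2_def by simp
qed

lemma path_ex: assumes "s1 > 0" "s2 > 0" "s3 > 0"
  shows "\<exists>p. \<forall>t\<in>{0..<1}. p t \<in> Rset s1 s2 s3 \<and>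
    sig2 s1 s2 s3 (p t) = (s1^2+4 * s2^2+s3^2) - t*((s1^2+4 * s2^2+s3^2) - tsL2 s1 s2 s3)"
proof -
  define w where "w = sqrt (s1^2+s3^2)"
  have w2: "w^2 = s1^2+s3^2" unfolding w_def by simp
  have wp: "w > 0" unfolding w_def using assms by (simp add: add_pos_pos)
  have c2e: "(2 * s2 - w)^2 = (s1^2+4 * s2^2+s3^2) - 4 * s2 * w"
    unfolding power2_diff w2 by simp
  have c2le: "(2 * s2 - w)^2 \<le> s1^2+4 * s2^2+s3^2"
    unfolding c2e using wp assms by simp
  have "sqrt (s3^2) < w" "sqrt (s1^2) < w" unfolding w_def using assms
    by (simp_all only: real_sqrt_less_iff) simp_all
  then have s1w: "s3 < w" "s1 < w" using assms by simp_all
  show ?thesis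
  proof (cases "(2 * s2 - (s1+s3))^2 \<le> (2 * s2 - w)^2")
    case True
    then have T: "tsL2 s1 s2 s3 = (2 * s2 - (s1+s3))^2" unfolding tsL2_def w_def by simp
    show ?thesis
    proof (intro exI[of _ "\<lambda>t. (t,t,t)"] ballI conjI)
      fix t :: real assume t: "t \<in> {0..<1}"
      show e: "sig2 s1 s2 s3 (t,t,t) = (s1^2+4 * s2^2+s3^2) - t*((s1^2+4 * s2^2+s3^2) - tsL2 s1 s2 s3)"
        unfolding T sig2_def by (simp add: power2_eq_square algebra_simps)
      have d: "1 - t^2 - t^2 - t^2 + 2*t*t*t = (1-t)^2*(1+2*t)" by (simp add: power2_eq_square algebra_simps)
      have "(1-t)^2*(1+2*t) > 0" using t by (intro mult_pos_pos) auto
      moreover have "t*((s1^2+4 * s2^2+s3^2) - tsL2 s1 s2 s3) \<ge> 0"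
        using t True c2le T by (intro mult_nonneg_nonneg) auto
      then have "sig2 s1 s2 s3 (t,t,t) \<le> sig2 s1 s2 s3 (0,0,0)"
        unfolding e sig2_0 by linarith
      ultimately show "(t,t,t) \<in> Rset s1 s2 s3" using t d unfolding Rset_def sig_def by auto
    qed
  next
    case False
    then have T: "tsL2 s1 s2 s3 = (2 * s2 - w)^2" unfolding tsL2_def w_def by simp
    show ?thesis
    proof (intro exI[of _ "\<lambda>t. (t * s3/w,0,t * s1/w)"] ballI conjI)
      fix t :: real assume t: "t \<in> {0..<1}"
      have "sig2 s1 s2 s3 (t * s3/w,0,t * s1/w) = (s1^2+4 * s2^2+s3^2) - 4 * s2 * t * (s1^2 + s3^2) / w"
        unfolding sig2_def by (simp add: power2_eq_square add_divide_distrib diff_divide_distrib algebra_simps)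
      also have "(s1^2 + s3^2) / w = w" unfolding w2[symmetric] using wp by (simp add: power2_eq_square)
      then have "4 * s2 * t * (s1^2 + s3^2) / w = t * (4 * s2 * w)"
        by (metis mult.assoc mult.commute times_divide_eq_right)
      finally show e: "sig2 s1 s2 s3 (t * s3/w,0,t * s1/w) = (s1^2+4 * s2^2+s3^2) - t*((s1^2+4 * s2^2+s3^2) - tsL2 s1 s2 s3)"
        unfolding T c2e by simp
      have "(t * s3/w)^2 + (t * s1/w)^2 = t^2 * ((s1^2 + s3^2) / w^2)"
        by (simp add: power_divide power_mult_distrib add_divide_distrib algebra_simps)
      also have "(s1^2 + s3^2) / w^2 = 1" using w2 wp assms by simp
      finally have d: "1 - (t * s3/w)^2 - 0^2 - (t * s1/w)^2 + 2*(t * s3/w)*0*(t * s1/w) = 1 - t^2"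
        by simp
      have "t^2 < 1" using t by (simp add: abs_square_less_1)
      moreover have "t*((s1^2+4 * s2^2+s3^2) - tsL2 s1 s2 s3) \<ge> 0"
        using t c2le T by (intro mult_nonneg_nonneg) auto
      then have "sig2 s1 s2 s3 (t * s3/w,0,t * s1/w) \<le> sig2 s1 s2 s3 (0,0,0)"
        unfolding e sig2_0 by linarith
      moreover have "t * s3 < w" "t * s1 < w"
      proof -
        have "t * s3 \<le> 1 * s3" "t * s1 \<le> 1 * s1" using t assms by (intro mult_right_mono; simp)+
        then show "t * s3 < w" "t * s1 < w" using s1w by simp_all
      qed
      then have "t * s3/w < 1" "t * s1/w < 1" using wp by simp_all
      moreover have "t * s3/w \<ge> 0" "t * s1/w \<ge> 0" using t wp assms by auto
      ultimately show "(t * s3/w,0,t * s1/w) \<in> Rset s1 s2 s3" using t d unfolding Rset_def sig_def by auto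
    qed
  qed
qed


lemma tsL2_le: assumes "s1 > 0" "s2 > 0" "s3 > 0"
  shows "tsL2 s1 s2 s3 \<le> s1^2+4 * s2^2+s3^2" "tsL2 s1 s2 s3 \<ge> 0"
proof -
  define w where "w = sqrt (s1^2+s3^2)"
  have w2: "w^2 = s1^2+s3^2" unfolding w_def by simp
  have wp: "w > 0" unfolding w_def using assms by (simp add: add_pos_pos)
  have c2e: "(2 * s2 - w)^2 = (s1^2+4 * s2^2+s3^2) - 4 * s2 * w"
    unfolding power2_diff w2 by simp
  have c2le: "(2 * s2 - w)^2 \<le> s1^2+4 * s2^2+s3^2"
    unfolding c2e using wp assms by simp
  then show "tsL2 s1 s2 s3 \<le> s1^2+4 * s2^2+s3^2" unfolding tsL2_def w_def by linarith
  show "tsL2 s1 s2 s3 \<ge> 0" unfolding tsL2_def by simp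
qed

lemma gg_ratio: assumes "x > 0" "S > 0"
  shows "gg a x / gg a S = sqrt S / sqrt x * exp (- 1/2 * a * (1/x - 1/S))"
proof -
  have "exp (- 1/2 * a * (1/x - 1/S)) = exp (-a/(2*x)) / exp (-a/(2*S))"
    unfolding exp_diff[symmetric] using assms by (simp add: field_simps)
  then show ?thesis unfolding gg_def using assms by (simp add: field_simps)
qed

theorem theorem1:
  fixes n :: nat and s1 s2 s3 z :: real
  assumes "n > 0" and "s1 > 0" and "s2 > 0" and "s3 > 0"
  shows "sL2 s1 s2 s3 \<le> tsL2 s1 s2 s3 \<and> tsL2 s1 s2 s3 \<le> (s0 s1 s2 s3)^2
    \<and> (tsL2 s1 s2 s3 \<le> real n * z^2 \<and> real n * z^2 \<le> (s0 s1 s2 s3)^2 \<longrightarrow>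
         evV n s1 s2 s3 z = Bup n s1 s2 s3 z \<and> Bup n s1 s2 s3 z \<ge> 1)
    \<and> (real n * z^2 \<le> tsL2 s1 s2 s3 \<longrightarrow>
         evV n s1 s2 s3 z \<ge> Blow n s1 s2 s3 z \<and> Blow n s1 s2 s3 z \<ge> 1
         \<and> evV n s1 s2 s3 z \<le> Bup n s1 s2 s3 z)
    \<and> ((s0 s1 s2 s3)^2 \<le> real n * z^2 \<longrightarrow> evV n s1 s2 s3 z = 1)"
proof -
  note sp = assms(2-4)
  define S0 where "S0 = s1^2+4 * s2^2+s3^2"
  define T where "T = tsL2 s1 s2 s3"
  define a where "a = real n * z^2"
  define c0 where "c0 = sqrt (real n / (2*pi))"
  define R where "R = Rset s1 s2 s3"
  define F where "F = fdens n s1 s2 s3 z"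
  define SS where "SS = (SUP r\<in>R. ereal (F r))"
  define \<sigma> where "\<sigma> = (\<lambda>t::real. S0 - t*(S0 - T))"
  have S0p: "S0 > 0" unfolding S0_def using sp by (simp add: add_pos_pos)
  have TS: "T \<le> S0" "T \<ge> 0" unfolding T_def S0_def using tsL2_le[OF sp] by auto
  have a0: "a \<ge> 0" unfolding a_def by simp
  have c0p: "c0 > 0" unfolding c0_def using assms(1) by simp
  have s0sq: "(s0 s1 s2 s3)^2 = S0" unfolding s0_def S0_def using S0p[unfolded S0_def] by simp
  have s0e: "s0 s1 s2 s3 = sqrt S0" unfolding s0_def S0_def by simp
  have tsLe: "tsL s1 s2 s3 = sqrt T" unfolding tsL_def T_def by simp
  obtain p where p: "\<And>t. t\<in>{0..<1} \<Longrightarrow> p t \<in> R \<and> sig2 s1 s2 s3 (p t) = \<sigma> t"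
    using path_ex[OF sp] unfolding R_def \<sigma>_def S0_def T_def by blast
  have \<sigma>p: "\<sigma> t > 0" if "t \<in> {0..<1}" for t
  proof -
    have "\<sigma> t = (1-t)*S0 + t*T" unfolding \<sigma>_def by (simp add: algebra_simps)
    moreover have "(1-t)*S0 > 0" using that S0p by simp
    moreover have "t*T \<ge> 0" using that TS by simp
    ultimately show ?thesis by linarith
  qed
  have Fp: "F (p t) = c0 * gg a (\<sigma> t)" if "t \<in> {0..<1}" for t
    using fd_pos[of s1 s2 s3 "p t" n z] p[OF that] \<sigma>p[OF that] unfolding F_def c0_def a_def by simp
  have lowS: "ereal (c0 * gg a (\<sigma> t)) \<le> SS" if "t \<in> {0..<1}" for t
    unfolding SS_def using p[OF that] Fp[OF that] by (metis SUP_upper)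
  have F0: "F (0,0,0) = c0 * gg a S0"
    using fd_pos[of s1 s2 s3 "(0,0,0)" n z] S0p unfolding F_def c0_def a_def sig2_0 S0_def by simp
  have f0p: "c0 * gg a S0 > 0" using c0p gg_pos[OF S0p] by simp
  have SS0: "ereal (c0 * gg a S0) \<le> SS" unfolding SS_def using R_0 F0 unfolding R_def by (metis SUP_upper)
  have upS: "SS \<le> ereal (c0 * gg a u)"
    if u: "u > 0" and h: "\<And>x. 0 < x \<Longrightarrow> x \<le> S0 \<Longrightarrow> gg a x \<le> gg a u" for u
    unfolding SS_def
  proof (rule SUP_least)
    fix r assume r: "r \<in> R"
    show "ereal (F r) \<le> ereal (c0 * gg a u)"
    proof (cases "sig2 s1 s2 s3 r > 0")
      case True
      have "F r = c0 * gg a (sig2 s1 s2 s3 r)"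
        using fd_pos[OF True] unfolding F_def c0_def a_def by simp
      also have "\<dots> \<le> c0 * gg a u" using h[OF True] R_le[of r] r c0p unfolding R_def S0_def
        by (intro mult_left_mono) auto
      finally show ?thesis by simp
    next
      case False
      then have "F r \<le> 0" using fd_nonpos unfolding F_def by (simp add: not_less)
      also have "0 \<le> c0 * gg a u" using c0p gg_pos[OF u, of a] by simp
      finally show ?thesis by simp
    qed
  qed
  have ev01: "eventually (\<lambda>x. x \<in> {0<..<1::real}) (at_left 1)"
    by (rule eventually_at_left_real) simp
  have limS: "ereal (c0 * gg a T) \<le> SS" if Tp: "T > 0"
  proof -
    have "((\<lambda>t. c0 * (exp (- a / (2 * \<sigma> t)) / sqrt (\<sigma> t))) \<longlongrightarrow>
        c0 * (exp (- a / (2 * \<sigma> 1)) / sqrt (\<sigma> 1))) (at_left 1)"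
      unfolding \<sigma>_def using Tp by (intro tendsto_intros) auto
    moreover have "\<sigma> 1 = T" unfolding \<sigma>_def by simp
    ultimately have "((\<lambda>t. ereal (c0 * gg a (\<sigma> t))) \<longlongrightarrow> ereal (c0 * gg a T)) (at_left 1)"
      unfolding gg_def by simp
    moreover have "eventually (\<lambda>t. ereal (c0 * gg a (\<sigma> t)) \<le> SS) (at_left 1)"
      using ev01 by eventually_elim (auto intro: lowS)
    ultimately show ?thesis by (rule tendsto_upperbound) simp
  qed
  have infS: "SS = \<infinity>" if "T = 0" "a = 0"
  proof (rule ereal_top)
    fix B :: real
    define M where "M = \<bar>B\<bar> + 1"
    define x where "x = min (S0/2) ((c0/M)^2)"
    have Mp: "M > 0" unfolding M_def by simp
    have xp: "x > 0" unfolding x_def using S0p c0p Mp by simp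
    define t where "t = 1 - x/S0"
    have t: "t \<in> {0..<1}" unfolding t_def using xp S0p by (auto simp: x_def field_simps)
    have st: "\<sigma> t = x" unfolding \<sigma>_def t_def using that S0p by (simp add: field_simps)
    have "x \<le> (c0/M)^2" unfolding x_def by simp
    then have "sqrt x \<le> sqrt ((c0/M)^2)" by (rule real_sqrt_le_mono)
    then have sx: "sqrt x \<le> c0/M" using c0p Mp by simp
    have "B < M" unfolding M_def by simp
    also have "M = c0 / (c0/M)" using c0p Mp by simp
    also have "c0 / (c0/M) \<le> c0 / sqrt x" using sx xp c0p Mp by (intro divide_left_mono) auto
    also have "c0 / sqrt x = c0 * gg a (\<sigma> t)" unfolding st gg_def using that by simp
    finally have "ereal B \<le> ereal (c0 * gg a (\<sigma> t))" by simp
    also have "\<dots> \<le> SS" using lowS[OF t] .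
    finally show "ereal B \<le> SS" .
  qed
  have evE: "evV n s1 s2 s3 z = SS / ereal (c0 * gg a S0)"
    unfolding evV_def SS_def R_def F_def using F0 unfolding F_def by simp
  have Bup_e: "Bup n s1 s2 s3 z = ereal (gg a a / gg a S0)" if "a > 0"
    unfolding Bup_def Let_def a_def[symmetric] s0sq s0e using that S0p gg_ratio[OF that S0p, of a] by simp
  have Bup_i: "Bup n s1 s2 s3 z = \<infinity>" if "a = 0"
    unfolding Bup_def Let_def a_def[symmetric] using that by simp
  have Blow_e: "Blow n s1 s2 s3 z = ereal (gg a T / gg a S0)" if "T > 0"
    unfolding Blow_def Let_def a_def[symmetric] s0sq s0e tsLe T_def[symmetric]
    using that S0p gg_ratio[OF that S0p, of a] by simp
  have Blow_i: "Blow n s1 s2 s3 z = \<infinity>" if "T = 0"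
    unfolding Blow_def Let_def tsLe using that by simp
  have ratio: "ereal (c0 * gg a x) / ereal (c0 * gg a S0) = ereal (gg a x / gg a S0)" for x
    using c0p f0p gg_pos[OF S0p, of a] by simp
  have ratio_ge: "ereal (gg a x / gg a S0) \<ge> 1" if "gg a x \<ge> gg a S0" for x
    using that gg_pos[OF S0p, of a] by simp
  have div_inf: "\<infinity> / ereal (c0 * gg a S0) = \<infinity>" using f0p by simp
  have P1: "sL2 s1 s2 s3 \<le> T"
  proof -
    have bdd: "bdd_below (sig2 s1 s2 s3 ` R)"
      unfolding R_def using R_lb[OF _ sp] by (intro bdd_belowI) blast
    have "(\<sigma> \<longlongrightarrow> \<sigma> 1) (at_left 1)" unfolding \<sigma>_def by (intro tendsto_intros)
    then have "(\<sigma> \<longlongrightarrow> T) (at_left 1)" unfolding \<sigma>_def by simp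
    moreover have "eventually (\<lambda>t. sL2 s1 s2 s3 \<le> \<sigma> t) (at_left 1)"
      using ev01
    proof eventually_elim
      case (elim t)
      then have t: "t \<in> {0..<1}" by simp
      have "sL2 s1 s2 s3 \<le> sig2 s1 s2 s3 (p t)" unfolding sL2_def
        using cInf_lower[OF imageI[of "p t" R "sig2 s1 s2 s3"] bdd] p[OF t] unfolding R_def by blast
      then show ?case using p[OF t] by simp
    qed
    ultimately show ?thesis by (rule tendsto_lowerbound) simp
  qed
  have Pi: "evV n s1 s2 s3 z = Bup n s1 s2 s3 z \<and> Bup n s1 s2 s3 z \<ge> 1" if h: "T \<le> a" "a \<le> S0"
  proof (cases "a = 0")
    case True
    then have "T = 0" using h TS by simp
    then show ?thesis using infS True evE div_inf Bup_i by simp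
  next
    case False
    then have ap: "a > 0" using a0 by simp
    have up: "SS \<le> ereal (c0 * gg a a)"
      by (rule upS[OF ap]) (metis ap gg_mono1 gg_mono2 linorder_le_cases)
    have lo: "ereal (c0 * gg a a) \<le> SS"
    proof (cases "T < a")
      case True
      define t where "t = (S0 - a)/(S0 - T)"
      have t: "t \<in> {0..<1}" unfolding t_def using True h by (auto simp: field_simps)
      have "\<sigma> t = a" unfolding \<sigma>_def t_def using True h by (simp add: field_simps)
      then show ?thesis using lowS[OF t] by simp
    next
      case False
      then have "T = a" using h by simp
      then show ?thesis using limS ap by simp
    qed
    have "SS = ereal (c0 * gg a a)" using up lo by simp
    then have "evV n s1 s2 s3 z = ereal (gg a a / gg a S0)" using evE ratio by simp
    moreover have "gg a a \<ge> gg a S0" using gg_mono2[OF ap _ h(2)] by simp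
    ultimately show ?thesis using Bup_e[OF ap] ratio_ge by simp
  qed
  have Pii: "evV n s1 s2 s3 z \<ge> Blow n s1 s2 s3 z \<and> Blow n s1 s2 s3 z \<ge> 1
         \<and> evV n s1 s2 s3 z \<le> Bup n s1 s2 s3 z" if h: "a \<le> T"
  proof (cases "T = 0")
    case True
    then have "a = 0" using h a0 by simp
    then show ?thesis using infS True evE div_inf Bup_i Blow_i by simp
  next
    case False
    then have Tp: "T > 0" using TS by simp
    have lo: "Blow n s1 s2 s3 z \<le> evV n s1 s2 s3 z"
    proof -
      have "ereal (gg a T / gg a S0) * ereal (c0 * gg a S0) = ereal (c0 * gg a T)"
        using gg_pos[OF S0p, of a] by simp
      then have "ereal (c0 * gg a S0) * ereal (gg a T / gg a S0) \<le> SS"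
        using limS[OF Tp] by (simp add: mult.commute)
      then show ?thesis unfolding evE Blow_e[OF Tp] using f0p by (subst ereal_le_divide_pos) auto
    qed
    have b1: "Blow n s1 s2 s3 z \<ge> 1"
    proof (cases "a = 0")
      case True
      then have "gg a T \<ge> gg a S0" unfolding gg_def using Tp TS by (simp add: frac_le)
      then show ?thesis unfolding Blow_e[OF Tp] using ratio_ge by simp
    next
      case False
      then have ap: "a > 0" using a0 by simp
      have "gg a T \<ge> gg a S0" using gg_mono2[OF ap h TS(1)] .
      then show ?thesis unfolding Blow_e[OF Tp] using ratio_ge by simp
    qed
    have up: "evV n s1 s2 s3 z \<le> Bup n s1 s2 s3 z"
    proof (cases "a = 0")
      case True
      then show ?thesis using Bup_i by simp
    next
      case False
      then have ap: "a > 0" using a0 by simp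
      have "SS \<le> ereal (c0 * gg a a)"
        by (rule upS[OF ap]) (metis ap gg_mono1 gg_mono2 linorder_le_cases)
      also have "ereal (c0 * gg a a) = ereal (c0 * gg a S0) * ereal (gg a a / gg a S0)"
        using gg_pos[OF S0p, of a] c0p by simp
      finally show ?thesis unfolding evE Bup_e[OF ap] using f0p by (subst ereal_divide_le_pos) auto
    qed
    show ?thesis using lo b1 up by simp
  qed
  have Piii: "evV n s1 s2 s3 z = 1" if h: "S0 \<le> a"
  proof -
    have ap: "a > 0" using h S0p by simp
    have "SS \<le> ereal (c0 * gg a S0)"
      by (rule upS[OF S0p]) (metis h gg_mono1 order_trans)
    then have "SS = ereal (c0 * gg a S0)" using SS0 by simp
    then show ?thesis unfolding evE using f0p c0p gg_pos[OF S0p, of a] by simp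
  qed
  show ?thesis
    unfolding T_def[symmetric] a_def[symmetric] s0sq
    using P1 TS(1) Pi Pii Piii by blast
qed

end
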